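(* Fix an integer $k\ge2$, and let $\alpha=1+\frac{3}{2k}$, $\beta=\frac{1}{5k}$. Let $A\cup B$ be an instance of $(n,n^\alpha,n^\beta)$-Nice Set Cover (with $n^{1/k}$ an integer and every vertex of $B$ having a neighbor in $A$) with optimum $OPT_{NSC}$. Build a digraph $G$ with vertex layers $V_1,\dots,V_{k+2}$ as follows: $V_1\cup\dots\cup V_{k+1}$ is the generalized butterfly of width $n$ and diameter $k$, i.e. $V_i=[n^{1/k}]^k\times\{i\}$ for $i\in[k+1]$ and there is an edge from $(u,i)$ to $(v,i+1)$ iff $u_j=v_j$ for all $j\ne i$; the layer $V_{k+1}$ is identified (by an arbitrary bijection) with $A$; $V_{k+2}=B$; and each edge of the set-cover instance is directed from $A=V_{k+1}$ to $B=V_{k+2}$. Then $S_k(G)=\Theta(OPT_{NSC}\cdot n^{2/k})$, where the hidden constants depend only on $k$ (for $n$ sufficiently large).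
   Context: An $(a',b',c')$-Nice Set Cover instance is a bipartite graph with parts $A$, $B$, $|A|=a'$, $|B|=b'$, $B$ partitioned into blocks $B_1,\dots,B_{a'}$ of size $b'/a'$, such that any $v\in A$ adjacent to some vertex of $B_i$ is adjacent to all of $B_i$, and each $v\in A$ is adjacent to at most $c'$ blocks; $OPT_{NSC}$ is the minimum number of vertices of $A$ covering $B$. For a digraph $G$, a $k$-TC-spanner is a digraph $H$ on the same vertices whose edges lie in the transitive closure of $G$ such that $d_H(u,v)\le k$ whenever $v$ is reachable from $u$ in $G$; $S_k(G)$ is the minimum number of edges of a $k$-TC-spanner. *)

theory Defs
  imports Complex_Main
begin

definition nice_set_cover ::
  "nat set \<Rightarrow> nat set \<Rightarrow> (nat \<times> nat) set \<Rightarrow> real \<Rightarrow> real \<Rightarrow> real \<Rightarrow> bool" where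
  "nice_set_cover A B E a' b' c' \<longleftrightarrow>
     finite A \<and> finite B \<and> real (card A) = a' \<and> real (card B) = b' \<and> E \<subseteq> A \<times> B \<and>
     (\<exists>Bl :: nat \<Rightarrow> nat set.
        (\<forall>i<card A. Bl i \<subseteq> B \<and> real (card (Bl i)) = b' / a') \<and>
        (\<forall>i<card A. \<forall>j<card A. i \<noteq> j \<longrightarrow> Bl i \<inter> Bl j = {}) \<and>
        (\<Union>i<card A. Bl i) = B \<and>
        (\<forall>v\<in>A. \<forall>i<card A. (\<exists>b\<in>Bl i. (v, b) \<in> E) \<longrightarrow> (\<forall>b\<in>Bl i. (v, b) \<in> E)) \<and>
        (\<forall>v\<in>A. real (card {i. i < card A \<and> (\<exists>b\<in>Bl i. (v, b) \<in> E)}) \<le> c'))"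

definition OPT_NSC :: "nat set \<Rightarrow> nat set \<Rightarrow> (nat \<times> nat) set \<Rightarrow> nat" where
  "OPT_NSC A B E = (LEAST t. \<exists>C. C \<subseteq> A \<and> (\<forall>b\<in>B. \<exists>a\<in>C. (a, b) \<in> E) \<and> card C = t)"

definition is_tc_spanner :: "('v \<times> 'v) set \<Rightarrow> nat \<Rightarrow> ('v \<times> 'v) set \<Rightarrow> bool" where
  "is_tc_spanner G k H \<longleftrightarrow> H \<subseteq> G\<^sup>+ \<and> (\<forall>(u, v)\<in>G\<^sup>*. \<exists>j\<le>k. (u, v) \<in> H ^^ j)"

definition S_k :: "nat \<Rightarrow> ('v \<times> 'v) set \<Rightarrow> nat" where
  "S_k k G = (LEAST t. \<exists>H. finite H \<and> is_tc_spanner G k H \<and> card H = t)"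

text \<open>Vertices: Lay u i is (u,i) with u \<in> [m]^k (coordinates 0..<m, list positions 0..<k standing
 for coordinates 1..k) and layer i \<in> {1..k+1}; BV b is the vertex b of B (layer k+2).\<close>
datatype bvert = Lay "nat list" nat | BV nat

definition coords :: "nat \<Rightarrow> nat \<Rightarrow> nat list set" where
  "coords m k = {u. length u = k \<and> set u \<subseteq> {..<m}}"

text \<open>f identifies layer V_{k+1} (i.e. coords m k) with A; E is the set-cover edge relation.\<close>
definition nsc_butterfly_graph ::
  "nat \<Rightarrow> nat \<Rightarrow> (nat list \<Rightarrow> nat) \<Rightarrow> nat set \<Rightarrow> (nat \<times> nat) set \<Rightarrow> (bvert \<times> bvert) set" where
  "nsc_butterfly_graph m k f B E =
     {(Lay u i, Lay v (Suc i)) | u v i. u \<in> coords m k \<and> v \<in> coords m k \<and> 1 \<le> i \<and> i \<le> k \<and>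
        (\<forall>j<k. j \<noteq> i - 1 \<longrightarrow> u ! j = v ! j)}
     \<union> {(Lay u (Suc k), BV b) | u b. u \<in> coords m k \<and> b \<in> B \<and> (f u, b) \<in> E}"

end

theory Submission
  imports Defs
begin


lemma relpow_mono_set: fixes R S :: "('a \<times> 'a) set" shows "R \<subseteq> S \<Longrightarrow> R ^^ n \<subseteq> S ^^ n"
  proof (induction n)
  case (Suc n) then show ?case using relcomp_mono[of "R^^n" "S^^n" R S] by simp
qed simp

lemma coords_card: "card (coords m k) = m ^ k" and coords_fin: "finite (coords m k)"
proof -
  have e: "coords m k = {xs. set xs \<subseteq> {..<m} \<and> length xs = k}" unfolding coords_def by auto
  show "card (coords m k) = m ^ k" unfolding e by (simp add: card_lists_length_eq)
  show "finite (coords m k)" unfolding e by (simp add: finite_lists_length_eq)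
qed

locale BF = fixes m k :: nat and f :: "nat list \<Rightarrow> nat" and B :: "nat set" and E :: "(nat \<times> nat) set"
begin

abbreviation "G \<equiv> nsc_butterfly_graph m k f B E"

fun lay :: "bvert \<Rightarrow> nat" where
  "lay (Lay u i) = i" | "lay (BV b) = Suc (Suc k)"

definition "bf = {(Lay u i, Lay v (Suc i)) | u v i. u \<in> coords m k \<and> v \<in> coords m k \<and> 1 \<le> i \<and> i \<le> k \<and>
        (\<forall>j<k. j \<noteq> i - 1 \<longrightarrow> u ! j = v ! j)}"
definition "ab = {(Lay u (Suc k), BV b) | u b. u \<in> coords m k \<and> b \<in> B \<and> (f u, b) \<in> E}"

lemma G_eq: "G = bf \<union> ab" unfolding nsc_butterfly_graph_def bf_def ab_def by simp

lemma G_cases: "(p,q) \<in> G \<Longrightarrow>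
  (\<exists>u v i. p = Lay u i \<and> q = Lay v (Suc i) \<and> u \<in> coords m k \<and> v \<in> coords m k \<and> 1 \<le> i \<and> i \<le> k \<and>
        (\<forall>j<k. j \<noteq> i - 1 \<longrightarrow> u ! j = v ! j)) \<or>
  (\<exists>u b. p = Lay u (Suc k) \<and> q = BV b \<and> u \<in> coords m k \<and> b \<in> B \<and> (f u, b) \<in> E)"
  unfolding nsc_butterfly_graph_def by blast

lemma G_lay: "(p,q) \<in> G \<Longrightarrow> lay q = Suc (lay p)"
  using G_cases by fastforce

lemma relpow_lay: "(p,q) \<in> G ^^ n \<Longrightarrow> lay q = lay p + n"
proof (induction n arbitrary: q)
  case 0 then show ?case by simp
next
  case (Suc n)
  then obtain r where "(p,r) \<in> G ^^ n" "(r,q) \<in> G" by (meson relpow_Suc_E)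
  then show ?case using Suc.IH G_lay by fastforce
qed

lemma rtrancl_lay: "(p,q) \<in> G\<^sup>* \<Longrightarrow> lay p \<le> lay q"
  by (metis rtrancl_power relpow_lay le_add1)

lemma trancl_lay: "(p,q) \<in> G\<^sup>+ \<Longrightarrow> lay p < lay q"
  by (metis trancl_power relpow_lay less_add_same_cancel1)

lemma reach_Lay: "(Lay u i, Lay v j) \<in> G ^^ n \<Longrightarrow> j = i + n \<and>
   (0 < n \<longrightarrow> u \<in> coords m k \<and> v \<in> coords m k \<and> 1 \<le> i \<and> j \<le> Suc k) \<and>
   (\<forall>t<k. (t < i - 1 \<or> j - 1 \<le> t) \<longrightarrow> u ! t = v ! t)"
proof (induction n arbitrary: v j)
  case 0 then show ?case by simp
next
  case (Suc n)
  then obtain r where r1: "(Lay u i, r) \<in> G ^^ n" and r2: "(r, Lay v j) \<in> G" by (meson relpow_Suc_E)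
  from G_cases[OF r2] obtain v' j' where rr: "r = Lay v' j'" "j = Suc j'" "v' \<in> coords m k" "v \<in> coords m k"
    "1 \<le> j'" "j' \<le> k" "\<forall>t<k. t \<noteq> j' - 1 \<longrightarrow> v' ! t = v ! t" by blast
  have IH: "j' = i + n \<and> (0 < n \<longrightarrow> u \<in> coords m k \<and> v' \<in> coords m k \<and> 1 \<le> i \<and> j' \<le> Suc k) \<and>
   (\<forall>t<k. (t < i - 1 \<or> j' - 1 \<le> t) \<longrightarrow> u ! t = v' ! t)" using Suc.IH r1 rr(1) by blast
  have uc: "u \<in> coords m k"
  proof (cases n)
    case 0 then show ?thesis using r1 rr by simp
  next
    case (Suc n') then show ?thesis using IH by simp
  qed
  show ?case
  proof (intro conjI impI allI)
    show "j = i + Suc n" using IH rr by simp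
    show "u \<in> coords m k" by (rule uc)
    show "v \<in> coords m k" by (rule rr(4))
    show "1 \<le> i" using IH rr uc by (cases n) auto
    show "j \<le> Suc k" using rr by simp
  next
    fix t assume t: "t < k" "t < i - 1 \<or> j - 1 \<le> t"
    have "u ! t = v' ! t" using IH t rr by auto
    moreover have "v' ! t = v ! t" using rr t IH by auto
    ultimately show "u ! t = v ! t" by simp
  qed
qed

lemma coordsD: "u \<in> coords m k \<Longrightarrow> length u = k \<and> set u \<subseteq> {..<m}"
  unfolding coords_def by simp

lemma anc_card: assumes "m \<ge> 1"
  shows "card {x \<in> coords m k. (Lay x 1, Lay v j) \<in> G\<^sup>*} \<le> m ^ (j - 1)"
proof -
  let ?S = "{x \<in> coords m k. (Lay x 1, Lay v j) \<in> G\<^sup>*}"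
  have agr: "\<forall>t<k. j - 1 \<le> t \<longrightarrow> x ! t = v ! t" if "x \<in> ?S" for x
  proof -
    from that obtain n where "(Lay x 1, Lay v j) \<in> G ^^ n" by (auto simp: rtrancl_power)
    from reach_Lay[OF this] show ?thesis by auto
  qed
  have inj: "inj_on (take (j - 1)) ?S"
  proof (rule inj_onI)
    fix x y assume xy: "x \<in> ?S" "y \<in> ?S" "take (j - 1) x = take (j - 1) y"
    have lx: "length x = k" "length y = k" using xy coordsD by auto
    show "x = y"
    proof (rule nth_equalityI)
      show "length x = length y" using lx by simp
      fix t assume "t < length x"
      then have t: "t < k" using lx by simp
      show "x ! t = y ! t"
      proof (cases "t < j - 1")
        case True
        then have "take (j - 1) x ! t = take (j - 1) y ! t" using xy by simp
        then show ?thesis using True by simp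
      next
        case False
        then show ?thesis using agr[OF xy(1)] agr[OF xy(2)] t by auto
      qed
    qed
  qed
  have sub: "take (j - 1) ` ?S \<subseteq> {xs. set xs \<subseteq> {..<m} \<and> length xs = min (j - 1) k}"
    using coordsD by (auto dest: in_set_takeD)
  have "card ?S = card (take (j - 1) ` ?S)" using inj by (simp add: card_image)
  also have "\<dots> \<le> card {xs. set xs \<subseteq> {..<m} \<and> length xs = min (j - 1) k}"
    by (rule card_mono[OF _ sub]) (simp add: finite_lists_length_eq)
  also have "\<dots> = m ^ min (j - 1) k" by (simp add: card_lists_length_eq)
  also have "\<dots> \<le> m ^ (j - 1)" using assms by (simp add: power_increasing)
  finally show ?thesis .
qed

lemma desc_card: assumes "m \<ge> 1"
  shows "card {w \<in> coords m k. (Lay v j, Lay w (Suc k)) \<in> G\<^sup>*} \<le> m ^ (Suc k - j)"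
proof -
  let ?S = "{w \<in> coords m k. (Lay v j, Lay w (Suc k)) \<in> G\<^sup>*}"
  have agr: "\<forall>t<k. t < j - 1 \<longrightarrow> w ! t = v ! t" if "w \<in> ?S" for w
  proof -
    from that obtain n where "(Lay v j, Lay w (Suc k)) \<in> G ^^ n" by (auto simp: rtrancl_power)
    from reach_Lay[OF this] show ?thesis by auto
  qed
  have inj: "inj_on (drop (j - 1)) ?S"
  proof (rule inj_onI)
    fix x y assume xy: "x \<in> ?S" "y \<in> ?S" "drop (j - 1) x = drop (j - 1) y"
    have lx: "length x = k" "length y = k" using xy coordsD by auto
    show "x = y"
    proof (rule nth_equalityI)
      show "length x = length y" using lx by simp
      fix t assume "t < length x"
      then have t: "t < k" using lx by simp
      show "x ! t = y ! t"
      proof (cases "t < j - 1")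
        case True
        then show ?thesis using agr[OF xy(1)] agr[OF xy(2)] t by auto
      next
        case False
        then have "drop (j - 1) x ! (t - (j - 1)) = drop (j - 1) y ! (t - (j - 1))" using xy by simp
        then show ?thesis using False lx t by simp
      qed
    qed
  qed
  have sub: "drop (j - 1) ` ?S \<subseteq> {xs. set xs \<subseteq> {..<m} \<and> length xs = k - (j - 1)}"
    using coordsD by (auto dest: in_set_dropD)
  have "card ?S = card (drop (j - 1) ` ?S)" using inj by (simp add: card_image)
  also have "\<dots> \<le> card {xs. set xs \<subseteq> {..<m} \<and> length xs = k - (j - 1)}"
    by (rule card_mono[OF _ sub]) (simp add: finite_lists_length_eq)
  also have "\<dots> = m ^ (k - (j - 1))" by (simp add: card_lists_length_eq)
  also have "\<dots> \<le> m ^ (Suc k - j)" using assms by (intro power_increasing) auto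
  finally show ?thesis .
qed

lemma bf_path: "u \<in> coords m k \<Longrightarrow> v \<in> coords m k \<Longrightarrow> 1 \<le> i \<Longrightarrow> i + d \<le> Suc k \<Longrightarrow>
   (\<forall>t<k. (t < i - 1 \<or> i + d - 1 \<le> t) \<longrightarrow> u ! t = v ! t) \<Longrightarrow> (Lay u i, Lay v (i + d)) \<in> bf ^^ d"
proof (induction d arbitrary: v)
  case 0
  have "u = v"
  proof (rule nth_equalityI)
    show "length u = length v" using 0 coordsD by auto
    fix t assume "t < length u" then show "u ! t = v ! t" using 0 coordsD by fastforce
  qed
  then show ?case by simp
next
  case (Suc d)
  define p where "p = i + d - 1"
  have pk: "p < k" using Suc.prems unfolding p_def by simp
  define v' where "v' = v[p := u ! p]"
  have lu: "length u = k" "length v = k" using Suc.prems coordsD by auto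
  have up: "u ! p < m" using Suc.prems(1) coordsD pk lu by (metis lessThan_iff nth_mem subsetD)
  have v'c: "v' \<in> coords m k" using Suc.prems(2) up unfolding v'_def coords_def
    by (auto dest: subsetD[OF set_update_subset_insert])
  have "(Lay u i, Lay v' (i + d)) \<in> bf ^^ d"
  proof (rule Suc.IH[OF Suc.prems(1) v'c Suc.prems(3)])
    show "i + d \<le> Suc k" using Suc.prems by simp
    show "\<forall>t<k. (t < i - 1 \<or> i + d - 1 \<le> t) \<longrightarrow> u ! t = v' ! t"
    proof (intro allI impI)
      fix t assume t: "t < k" "t < i - 1 \<or> i + d - 1 \<le> t"
      show "u ! t = v' ! t"
      proof (cases "t = p")
        case True then show ?thesis using lu t unfolding v'_def by simp
      next
        case False
        then have "v' ! t = v ! t" unfolding v'_def by simp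
        moreover have "t < i - 1 \<or> i + Suc d - 1 \<le> t" using t False p_def by auto
        ultimately show ?thesis using Suc.prems(5) t by auto
      qed
    qed
  qed
  moreover have "(Lay v' (i + d), Lay v (Suc (i + d))) \<in> bf"
    unfolding bf_def using v'c Suc.prems unfolding v'_def p_def by auto
  ultimately show ?case by auto
qed

lemma G_noBV: "(BV b, q) \<notin> G" using G_cases by blast

lemma ab_reach: assumes "(Lay v (Suc k), BV b) \<in> G\<^sup>+" shows "v \<in> coords m k \<and> b \<in> B \<and> (f v, b) \<in> E"
proof -
  from assms obtain n where n: "n > 0" "(Lay v (Suc k), BV b) \<in> G ^^ n" by (auto simp: trancl_power)
  from relpow_lay[OF n(2)] have "n = 1" by simp
  with n have "(Lay v (Suc k), BV b) \<in> G" by simp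
  then show ?thesis using G_cases by blast
qed

lemma long_edge:
  assumes HG: "H \<subseteq> G\<^sup>+"
  shows "(s,t) \<in> H ^^ j \<Longrightarrow> lay s + j < lay t \<Longrightarrow>
     \<exists>p q. (p,q) \<in> H \<and> lay p + 2 \<le> lay q \<and> (s,p) \<in> G\<^sup>* \<and> (q,t) \<in> G\<^sup>*"
proof (induction j arbitrary: t)
  case 0 then show ?case by simp
next
  case (Suc j)
  then obtain r where r: "(s,r) \<in> H ^^ j" "(r,t) \<in> H" by (meson relpow_Suc_E)
  have sr: "(s,r) \<in> G\<^sup>*"
  proof -
    have "(s,r) \<in> (G\<^sup>+) ^^ j" using relpow_mono_set[OF HG] r(1) by blast
    then have "(s,r) \<in> (G\<^sup>+)\<^sup>*" by (rule relpow_imp_rtrancl)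
    then show ?thesis by simp
  qed
  have rt: "(r,t) \<in> G\<^sup>+" using r(2) HG by auto
  show ?case
  proof (cases "lay r + 2 \<le> lay t")
    case True then show ?thesis using r(2) sr by blast
  next
    case False
    then have "lay s + j < lay r" using Suc.prems by simp
    from Suc.IH[OF r(1) this] obtain p q where "(p,q) \<in> H" "lay p + 2 \<le> lay q" "(s,p) \<in> G\<^sup>*" "(q,r) \<in> G\<^sup>*" by blast
    then show ?thesis using rt by (meson rtrancl_trans trancl_into_rtrancl)
  qed
qed

end

context BF begin

lemma G_star_of_H: assumes "H \<subseteq> G\<^sup>+" "(p,q) \<in> H ^^ j" shows "(p,q) \<in> G\<^sup>*"
proof -
  have "(p,q) \<in> (G\<^sup>+) ^^ j" using relpow_mono_set[OF assms(1)] assms(2) by blast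
  then have "(p,q) \<in> (G\<^sup>+)\<^sup>*" by (rule relpow_imp_rtrancl)
  then show ?thesis by simp
qed

lemma full_reach: assumes "x \<in> coords m k" "w \<in> coords m k" shows "(Lay x 1, Lay w (Suc k)) \<in> G\<^sup>*"
proof -
  have "(Lay x 1, Lay w (1 + k)) \<in> bf ^^ k" using bf_path[OF assms, of 1 k] coordsD by simp
  then have "(Lay x 1, Lay w (Suc k)) \<in> G ^^ k" using relpow_mono_set[of bf G k] G_eq by auto
  then show ?thesis by (rule relpow_imp_rtrancl)
qed

lemma reach_coords: assumes "x \<in> coords m k" "(Lay x i, Lay v j) \<in> G\<^sup>*" shows "v \<in> coords m k"
proof -
  from assms(2) obtain n where n: "(Lay x i, Lay v j) \<in> G ^^ n" by (auto simp: rtrancl_power)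
  show ?thesis
  proof (cases n)
    case 0 then show ?thesis using n assms(1) by simp
  next
    case (Suc n') then show ?thesis using reach_Lay[OF n] by simp
  qed
qed

lemma lower_bound:
  assumes m1: "m \<ge> 1" and k2: "k \<ge> 2"
  and fb: "bij_betw f (coords m k) A"
  and EAB: "E \<subseteq> A \<times> B"
  and nb: "\<forall>b\<in>B. \<exists>a\<in>A. (a,b) \<in> E"
  and blk: "\<forall>i<m^k. Bl i \<subseteq> B \<and> card (Bl i) = s"
  and disj: "\<forall>i<m^k. \<forall>j<m^k. i \<noteq> j \<longrightarrow> Bl i \<inter> Bl j = {}"
  and cov: "(\<Union>i<m^k. Bl i) = B"
  and aon: "\<forall>v\<in>A. \<forall>i<m^k. (\<exists>b\<in>Bl i. (v,b) \<in> E) \<longrightarrow> (\<forall>b\<in>Bl i. (v,b) \<in> E)"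
  and sm: "m \<le> s"
  and opt: "\<forall>C. C \<subseteq> A \<and> (\<forall>b\<in>B. \<exists>a\<in>C. (a,b) \<in> E) \<longrightarrow> OPT \<le> card C"
  and finB: "finite B"
  and HG: "H \<subseteq> G\<^sup>+" and finH: "finite H" and span: "\<forall>(u,v)\<in>G\<^sup>*. \<exists>j\<le>k. (u,v) \<in> H ^^ j"
  shows "OPT * m^2 \<le> 2 * card H"
proof -
  define X where "X = coords m k"
  define Ax where "Ax x = {w \<in> coords m k. \<exists>j<k. (Lay x 1, Lay w (Suc k)) \<in> H ^^ j}" for x
  define Z where "Z = (\<lambda>(v,j). Lay v j) ` (coords m k \<times> {..k})"
  define h where "h z = card {b. (z, BV b) \<in> H}" for z
  define Wx where "Wx x = {b \<in> B. \<not>(\<exists>w\<in>Ax x. (f w, b) \<in> E)}" for x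
  have finX: "finite X" unfolding X_def by (rule coords_fin)
  have finZ: "finite Z" unfolding Z_def using coords_fin by simp
  have finAx: "finite (Ax x)" for x unfolding Ax_def using coords_fin by simp
  have finhz: "finite {b. (z, BV b) \<in> H}" for z
  proof -
    have "{b. (z, BV b) \<in> H} = (\<lambda>b. (z, BV b)) -` H" by auto
    moreover have "inj (\<lambda>b. (z, BV b))" by (auto simp: inj_def)
    ultimately show ?thesis using finite_vimageI[OF finH] by simp
  qed
  have fA: "f ` coords m k = A" using fb by (simp add: bij_betw_def)
  have cardX: "card X = m ^ k" unfolding X_def by (rule coords_card)
  have claim1: "card (Wx x) \<le> (\<Sum>z\<in>{z \<in> Z. (Lay x 1, z) \<in> G\<^sup>*}. h z)" if xX: "x \<in> X" for x
  proof -
    have sub: "Wx x \<subseteq> (\<Union>z\<in>{z \<in> Z. (Lay x 1, z) \<in> G\<^sup>*}. {b. (z, BV b) \<in> H})"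
    proof
      fix b assume bW: "b \<in> Wx x"
      then have bB: "b \<in> B" and nW: "\<not>(\<exists>w\<in>Ax x. (f w, b) \<in> E)" unfolding Wx_def by auto
      from nb bB obtain a where a: "a \<in> A" "(a,b) \<in> E" by blast
      then obtain w where w: "w \<in> coords m k" "f w = a" using fA by auto
      have "(Lay w (Suc k), BV b) \<in> G" using w a bB G_eq unfolding ab_def by auto
      then have "(Lay x 1, BV b) \<in> G\<^sup>*" using full_reach[OF xX[unfolded X_def] w(1)] by simp
      with span obtain j where j: "j \<le> k" "(Lay x 1, BV b) \<in> H ^^ j" by blast
      then obtain j' where j': "j = Suc j'" by (cases j) auto
      with j obtain z where z: "(Lay x 1, z) \<in> H ^^ j'" "(z, BV b) \<in> H" by (meson relpow_Suc_E)
      have xz: "(Lay x 1, z) \<in> G\<^sup>*" by (rule G_star_of_H[OF HG z(1)])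
      have zb: "(z, BV b) \<in> G\<^sup>+" using z(2) HG by auto
      have "lay z < Suc (Suc k)" using trancl_lay[OF zb] by simp
      then obtain v i where zv: "z = Lay v i" "i \<le> Suc k" by (cases z) auto
      have vc: "v \<in> coords m k" using reach_coords[OF xX[unfolded X_def]] xz zv by simp
      have "i \<noteq> Suc k"
      proof
        assume "i = Suc k"
        then have "(f v, b) \<in> E" using ab_reach zb zv by simp
        moreover have "v \<in> Ax x" proof -
          have "j' < k" using j j' by simp
          moreover have "(Lay x 1, Lay v (Suc k)) \<in> H ^^ j'" using z(1) zv \<open>i = Suc k\<close> by simp
          ultimately show ?thesis unfolding Ax_def using vc by auto
        qed
        ultimately show False using nW by blast
      qed
      then have "z \<in> Z" unfolding Z_def using zv vc by auto
      then show "b \<in> (\<Union>z\<in>{z \<in> Z. (Lay x 1, z) \<in> G\<^sup>*}. {b. (z, BV b) \<in> H})" using xz z(2) by auto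
    qed
    have "card (Wx x) \<le> card (\<Union>z\<in>{z \<in> Z. (Lay x 1, z) \<in> G\<^sup>*}. {b. (z, BV b) \<in> H})"
      by (rule card_mono[OF _ sub]) (use finZ finhz in auto)
    also have "\<dots> \<le> (\<Sum>z\<in>{z \<in> Z. (Lay x 1, z) \<in> G\<^sup>*}. h z)" unfolding h_def
      by (rule card_UN_le) (use finZ in auto)
    finally show ?thesis .
  qed
  have claim2: "OPT * s \<le> card (Ax x) * s + card (Wx x)" if xX: "x \<in> X" for x
  proof -
    define U where "U = {i. i < m^k \<and> \<not>(\<exists>w\<in>Ax x. \<exists>b\<in>Bl i. (f w, b) \<in> E)}"
    have finU: "finite U" unfolding U_def by simp
    have s0: "s > 0" using sm m1 by simp
    have finBl: "i < m^k \<Longrightarrow> finite (Bl i)" for i using blk s0 by (metis card.infinite less_not_refl2)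
    have "(\<Union>i\<in>U. Bl i) \<subseteq> Wx x" unfolding U_def Wx_def using blk by blast
    then have "card (\<Union>i\<in>U. Bl i) \<le> card (Wx x)"
      by (rule card_mono[rotated]) (use finB in \<open>auto simp: Wx_def\<close>)
    moreover have "card (\<Union>i\<in>U. Bl i) = (\<Sum>i\<in>U. card (Bl i))"
      by (rule card_UN_disjoint) (use finU finBl disj in \<open>auto simp: U_def\<close>)
    moreover have "(\<Sum>i\<in>U. card (Bl i)) = card U * s" using blk by (simp add: U_def)
    ultimately have a: "card U * s \<le> card (Wx x)" by simp
    define g where "g i = (SOME a. a \<in> A \<and> (\<exists>b\<in>Bl i. (a,b) \<in> E))" for i
    have g: "g i \<in> A \<and> (\<exists>b\<in>Bl i. (g i,b) \<in> E)" if "i < m^k" for i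
    proof -
      have "Bl i \<noteq> {}" using blk that s0 by (metis card.empty less_not_refl2)
      then obtain b where "b \<in> Bl i" by blast
      then have "b \<in> B" using blk that by blast
      then obtain a where "a \<in> A" "(a,b) \<in> E" using nb by blast
      then have "\<exists>a. a \<in> A \<and> (\<exists>b\<in>Bl i. (a,b) \<in> E)" using \<open>b \<in> Bl i\<close> by blast
      then show ?thesis unfolding g_def by (rule someI_ex)
    qed
    define C where "C = f ` Ax x \<union> g ` U"
    have CA: "C \<subseteq> A" unfolding C_def using fA g by (auto simp: Ax_def U_def)
    have Ccov: "\<forall>b\<in>B. \<exists>a\<in>C. (a,b) \<in> E"
    proof
      fix b assume "b \<in> B"
      then obtain i where i: "i < m^k" "b \<in> Bl i" using cov by blast
      show "\<exists>a\<in>C. (a,b) \<in> E"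
      proof (cases "i \<in> U")
        case True
        then have "(g i, b) \<in> E" using g[OF i(1)] aon i by blast
        then show ?thesis using True unfolding C_def by blast
      next
        case False
        then obtain w b' where "w \<in> Ax x" "b' \<in> Bl i" "(f w, b') \<in> E" using i unfolding U_def by blast
        moreover have "f w \<in> A" using \<open>w \<in> Ax x\<close> fA unfolding Ax_def by auto
        ultimately have "(f w, b) \<in> E" using aon i by blast
        then show ?thesis using \<open>w \<in> Ax x\<close> unfolding C_def by blast
      qed
    qed
    have "OPT \<le> card C" using opt CA Ccov by blast
    also have "\<dots> \<le> card (f ` Ax x) + card (g ` U)" unfolding C_def by (rule card_Un_le)
    also have "\<dots> \<le> card (Ax x) + card U" by (intro add_mono card_image_le finAx finU)
    finally have "OPT * s \<le> (card (Ax x) + card U) * s" by simp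
    then show ?thesis using a by (simp add: add_mult_distrib)
  qed
  have claim3: "(\<Sum>x\<in>X. \<Sum>z\<in>{z \<in> Z. (Lay x 1, z) \<in> G\<^sup>*}. h z) \<le> m^(k-1) * card H"
  proof -
    have "(\<Sum>x\<in>X. \<Sum>z\<in>{z \<in> Z. (Lay x 1, z) \<in> G\<^sup>*}. h z) = (\<Sum>z\<in>Z. \<Sum>x\<in>{x \<in> X. (Lay x 1, z) \<in> G\<^sup>*}. h z)"
      by (rule sum.swap_restrict[OF finX finZ])
    also have "\<dots> = (\<Sum>z\<in>Z. card {x \<in> X. (Lay x 1, z) \<in> G\<^sup>*} * h z)" by simp
    also have "\<dots> \<le> (\<Sum>z\<in>Z. m^(k-1) * h z)"
    proof (rule sum_mono)
      fix z assume "z \<in> Z"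
      then obtain v j where zv: "z = Lay v j" "j \<le> k" unfolding Z_def by auto
      have "card {x \<in> X. (Lay x 1, z) \<in> G\<^sup>*} \<le> m^(j-1)" unfolding X_def zv using anc_card[OF m1] by simp
      also have "\<dots> \<le> m^(k-1)" using m1 zv by (intro power_increasing) auto
      finally show "card {x \<in> X. (Lay x 1, z) \<in> G\<^sup>*} * h z \<le> m^(k-1) * h z" by simp
    qed
    also have "\<dots> = m^(k-1) * (\<Sum>z\<in>Z. h z)" by (simp add: sum_distrib_left)
    also have "(\<Sum>z\<in>Z. h z) = card (Sigma Z (\<lambda>z. {b. (z, BV b) \<in> H}))" unfolding h_def
      by (rule card_SigmaI[symmetric]) (use finZ finhz in auto)
    also have "\<dots> \<le> card H"
    proof (rule card_inj_on_le[of "\<lambda>(z,b). (z, BV b)"])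
      show "inj_on (\<lambda>(z,b). (z, BV b)) (Sigma Z (\<lambda>z. {b. (z, BV b) \<in> H}))" by (auto simp: inj_on_def)
      show "(\<lambda>(z,b). (z, BV b)) ` (Sigma Z (\<lambda>z. {b. (z, BV b) \<in> H})) \<subseteq> H" by auto
    qed (rule finH)
    finally show ?thesis by simp
  qed
  have claim4: "(\<Sum>x\<in>X. card (Ax x)) \<le> m^(k-2) * card H"
  proof -
    define L where "L = {e \<in> H. lay (fst e) + 2 \<le> lay (snd e)}"
    define anc where "anc p = {x \<in> coords m k. (Lay x 1, p) \<in> G\<^sup>*}" for p
    define desc where "desc q = {w \<in> coords m k. (q, Lay w (Suc k)) \<in> G\<^sup>*}" for q
    have finL: "finite L" unfolding L_def using finH by simp
    have "(\<Sum>x\<in>X. card (Ax x)) = card (Sigma X Ax)"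
      by (rule card_SigmaI[symmetric]) (use finX finAx in auto)
    also have "\<dots> \<le> card (\<Union>e\<in>L. anc (fst e) \<times> desc (snd e))"
    proof (rule card_mono)
      show "finite (\<Union>e\<in>L. anc (fst e) \<times> desc (snd e))" using finL coords_fin
        unfolding anc_def desc_def by auto
      show "Sigma X Ax \<subseteq> (\<Union>e\<in>L. anc (fst e) \<times> desc (snd e))"
      proof
        fix xw assume "xw \<in> Sigma X Ax"
        then obtain x w where xw: "xw = (x,w)" "x \<in> X" "w \<in> Ax x" by auto
        then obtain j where j: "j < k" "w \<in> coords m k" "(Lay x 1, Lay w (Suc k)) \<in> H ^^ j"
          unfolding Ax_def by auto
        have "lay (Lay x 1) + j < lay (Lay w (Suc k))" using j by simp
        from long_edge[OF HG j(3) this] obtain p q where pq: "(p,q) \<in> H" "lay p + 2 \<le> lay q"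
          "(Lay x 1, p) \<in> G\<^sup>*" "(q, Lay w (Suc k)) \<in> G\<^sup>*" by blast
        then show "xw \<in> (\<Union>e\<in>L. anc (fst e) \<times> desc (snd e))"
          unfolding L_def anc_def desc_def using xw j X_def by force
      qed
    qed
    also have "\<dots> \<le> (\<Sum>e\<in>L. card (anc (fst e) \<times> desc (snd e)))" by (rule card_UN_le[OF finL])
    also have "\<dots> \<le> (\<Sum>e\<in>L. m^(k-2))"
    proof (rule sum_mono)
      fix e assume eL: "e \<in> L"
      obtain p q where e: "e = (p,q)" by (cases e)
      show "card (anc (fst e) \<times> desc (snd e)) \<le> m^(k-2)"
      proof (cases "anc p = {} \<or> desc q = {}")
        case True then show ?thesis using e by auto
      next
        case False
        then obtain x w where x: "x \<in> anc p" and w: "w \<in> desc q" by blast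
        have l1: "1 \<le> lay p" using rtrancl_lay x unfolding anc_def by fastforce
        have l2: "lay q \<le> Suc k" using rtrancl_lay w unfolding desc_def by fastforce
        have l3: "lay p + 2 \<le> lay q" using eL e unfolding L_def by simp
        obtain u i where pu: "p = Lay u i" using l2 l3 by (cases p) auto
        obtain v j where qv: "q = Lay v j" using l2 by (cases q) auto
        have "card (anc p \<times> desc q) = card (anc p) * card (desc q)" by (simp add: card_cartesian_product)
        also have "\<dots> \<le> m^(i-1) * m^(Suc k - j)"
          using anc_card[OF m1, of u i] desc_card[OF m1, of v j] unfolding anc_def desc_def pu qv
          by (intro mult_le_mono) auto
        also have "\<dots> = m^(i - 1 + (Suc k - j))" by (simp add: power_add)
        also have "\<dots> \<le> m^(k-2)" using m1 l1 l2 l3 pu qv by (intro power_increasing) auto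
        finally show ?thesis using e by simp
      qed
    qed
    also have "\<dots> = card L * m^(k-2)" by simp
    also have "\<dots> \<le> card H * m^(k-2)" unfolding L_def using finH by (intro mult_le_mono1 card_mono) auto
    finally show ?thesis by (simp add: mult.commute)
  qed
  have sumW: "(\<Sum>x\<in>X. card (Wx x)) \<le> m^(k-1) * card H"
  proof -
    have "(\<Sum>x\<in>X. card (Wx x)) \<le> (\<Sum>x\<in>X. \<Sum>z\<in>{z \<in> Z. (Lay x 1, z) \<in> G\<^sup>*}. h z)"
      using claim1 by (rule sum_mono)
    then show ?thesis using claim3 by (rule le_trans)
  qed
  have km: "m^(k-1) = m^(k-2) * m"
  proof -
    have "k - 1 = Suc (k-2)" using k2 by simp
    then show ?thesis by (simp add: power_Suc2)
  qed
  have km2: "m^k = m^(k-2) * m^2"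
  proof -
    have "k = (k-2) + 2" using k2 by simp
    then have "m^k = m^((k-2) + 2)" by simp
    then show ?thesis by (simp only: power_add)
  qed
  define a where "a = m^(k-2)"
  define c where "c = card H"
  have "(\<Sum>x\<in>X. OPT * s) \<le> (\<Sum>x\<in>X. card (Ax x) * s + card (Wx x))"
    using claim2 by (rule sum_mono)
  also have "\<dots> = (\<Sum>x\<in>X. card (Ax x)) * s + (\<Sum>x\<in>X. card (Wx x))"
    by (simp add: sum.distrib sum_distrib_right)
  also have "\<dots> \<le> (a * c) * s + (a * m) * c"
    using claim4 sumW km unfolding a_def c_def by (intro add_mono mult_le_mono1) auto
  also have "(a * m) * c \<le> (a * s) * c" using sm by simp
  finally have ineq: "(\<Sum>x\<in>X. OPT * s) \<le> (a * c) * s + (a * s) * c" by simp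
  have e1: "(\<Sum>x\<in>X. OPT * s) = (a * s) * (OPT * m^2)" using cardX km2 unfolding a_def by simp
  have e2: "(a * c) * s + (a * s) * c = (a * s) * (2 * c)" by simp
  have ineq2: "(a * s) * (OPT * m^2) \<le> (a * s) * (2 * c)" using ineq unfolding e1 e2 .
  have pos: "0 < a * s" using m1 sm unfolding a_def by simp
  show ?thesis using ineq2 pos unfolding c_def by (meson mult_le_cancel1)
qed

end

context BF begin

lemma upper_bound:
  assumes m1: "m \<ge> 1" and k2: "k \<ge> 2"
  and fb: "bij_betw f (coords m k) A"
  and finB: "finite B" and finE: "finite E"
  and CA: "C \<subseteq> A" and Ccov: "\<forall>b\<in>B. \<exists>a\<in>C. (a,b) \<in> E"
  shows "\<exists>H. finite H \<and> is_tc_spanner G k H \<and> card H \<le> m^k * k * m + card E + card C * m^2"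
proof -
  define Sh where "Sh = {(Lay y (k-1), Lay w (Suc k)) | y w. w \<in> coords m k \<and> f w \<in> C \<and> y \<in> coords m k \<and>
      (\<forall>t<k-2. y ! t = w ! t)}"
  define H where "H = G \<union> Sh"
  have fA: "f ` coords m k = A" and finj: "inj_on f (coords m k)" using fb by (auto simp: bij_betw_def)
  have finA: "finite A" using fA coords_fin by auto
  have finC: "finite C" using CA finA finite_subset by auto
  have bfsub: "bf \<subseteq> (\<lambda>(u,i,t). (Lay u i, Lay (u[i-1:=t]) (Suc i))) ` (coords m k \<times> {1..k} \<times> {..<m})"
  proof
    fix e assume "e \<in> bf"
    then obtain u v i where e: "e = (Lay u i, Lay v (Suc i))" "u \<in> coords m k" "v \<in> coords m k" "1 \<le> i" "i \<le> k"
      "\<forall>j<k. j \<noteq> i - 1 \<longrightarrow> u ! j = v ! j" unfolding bf_def by blast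
    have lu: "length u = k" "length v = k" "set v \<subseteq> {..<m}" using e coordsD by auto
    have ik: "i - 1 < k" using e by simp
    have "v = u[i-1 := v ! (i-1)]"
      by (rule nth_equalityI) (use lu e ik in \<open>auto simp: nth_list_update\<close>)
    moreover have "v ! (i-1) < m" using lu ik by (metis lessThan_iff nth_mem subsetD)
    ultimately show "e \<in> (\<lambda>(u,i,t). (Lay u i, Lay (u[i-1:=t]) (Suc i))) ` (coords m k \<times> {1..k} \<times> {..<m})"
      using e by (intro image_eqI[of _ _ "(u, i, v ! (i-1))"]) auto
  qed
  have finbf: "finite bf" by (rule finite_subset[OF bfsub]) (use coords_fin in auto)
  have cbf: "card bf \<le> m^k * k * m"
  proof -
    have "card bf \<le> card ((\<lambda>(u,i,t). (Lay u i, Lay (u[i-1:=t]) (Suc i))) ` (coords m k \<times> {1..k} \<times> {..<m}))"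
      by (rule card_mono[OF _ bfsub]) (use coords_fin in auto)
    also have "\<dots> \<le> card (coords m k \<times> {1..k} \<times> {..<m})" by (rule card_image_le) (use coords_fin in auto)
    also have "\<dots> = m^k * k * m" by (simp add: card_cartesian_product coords_card)
    finally show ?thesis .
  qed
  define P where "P = {(u,b). u \<in> coords m k \<and> b \<in> B \<and> (f u, b) \<in> E}"
  have abeq: "ab = (\<lambda>(u,b). (Lay u (Suc k), BV b)) ` P" unfolding ab_def P_def by auto
  have finP: "finite P" unfolding P_def
    by (rule finite_subset[of _ "coords m k \<times> B"]) (use coords_fin finB in auto)
  have finab: "finite ab" unfolding abeq using finP by simp
  have cab: "card ab \<le> card E"
  proof -
    have "card ab \<le> card P" unfolding abeq using finP by (rule card_image_le)
    also have "\<dots> \<le> card E"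
    proof (rule card_inj_on_le[of "\<lambda>(u,b). (f u, b)"])
      show "inj_on (\<lambda>(u,b). (f u, b)) P" using finj unfolding P_def by (auto simp: inj_on_def)
      show "(\<lambda>(u,b). (f u, b)) ` P \<subseteq> E" unfolding P_def by auto
    qed (rule finE)
    finally show ?thesis .
  qed
  define W where "W = {w \<in> coords m k. f w \<in> C}"
  have finW: "finite W" unfolding W_def using coords_fin by simp
  have cW: "card W \<le> card C"
    by (rule card_inj_on_le[of f]) (use finj finC in \<open>auto simp: W_def inj_on_def\<close>)
  have Shsub: "Sh \<subseteq> (\<lambda>(w,t1,t2). (Lay (w[k-2:=t1, k-1:=t2]) (k-1), Lay w (Suc k))) ` (W \<times> {..<m} \<times> {..<m})"
  proof
    fix e assume "e \<in> Sh"
    then obtain y w where e: "e = (Lay y (k-1), Lay w (Suc k))" "w \<in> coords m k" "f w \<in> C" "y \<in> coords m k"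
      "\<forall>t<k-2. y ! t = w ! t" unfolding Sh_def by blast
    have lu: "length y = k" "length w = k" "set y \<subseteq> {..<m}" using e coordsD by auto
    have "y = w[k-2 := y ! (k-2), k-1 := y ! (k-1)]"
    proof (rule nth_equalityI)
      show "length y = length (w[k-2 := y ! (k-2), k-1 := y ! (k-1)])" using lu by simp
      fix t assume "t < length y"
      then show "y ! t = w[k-2 := y ! (k-2), k-1 := y ! (k-1)] ! t" using lu e(5) k2
        by (cases "t = k-1"; cases "t = k-2") (auto simp: nth_list_update)
    qed
    moreover have "y ! (k-2) \<in> set y" "y ! (k-1) \<in> set y" using lu k2 by auto
    then have "y ! (k-2) < m" "y ! (k-1) < m" using lu(3) by (meson lessThan_iff subsetD)+
    ultimately show "e \<in> (\<lambda>(w,t1,t2). (Lay (w[k-2:=t1, k-1:=t2]) (k-1), Lay w (Suc k))) ` (W \<times> {..<m} \<times> {..<m})"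
      using e by (intro image_eqI[of _ _ "(w, y ! (k-2), y ! (k-1))"]) (auto simp: W_def)
  qed
  have finSh: "finite Sh" by (rule finite_subset[OF Shsub]) (use finW in auto)
  have cSh: "card Sh \<le> card C * m^2"
  proof -
    have "card Sh \<le> card ((\<lambda>(w,t1,t2). (Lay (w[k-2:=t1, k-1:=t2]) (k-1), Lay w (Suc k))) ` (W \<times> {..<m} \<times> {..<m}))"
      by (rule card_mono[OF _ Shsub]) (use finW in auto)
    also have "\<dots> \<le> card (W \<times> {..<m} \<times> {..<m})" by (rule card_image_le) (use finW in auto)
    also have "\<dots> = card W * m^2" by (simp add: card_cartesian_product power2_eq_square)
    also have "\<dots> \<le> card C * m^2" using cW by simp
    finally show ?thesis .
  qed
  have finH: "finite H" unfolding H_def G_eq using finbf finab finSh by simp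
  have cH: "card H \<le> m^k * k * m + card E + card C * m^2"
  proof -
    have "card H \<le> card bf + card ab + card Sh" unfolding H_def G_eq
      using card_Un_le[of bf ab] card_Un_le[of "bf \<union> ab" Sh] by linarith
    then show ?thesis using cbf cab cSh by linarith
  qed
  have GH: "G \<subseteq> H" unfolding H_def by simp
  have ShG: "Sh \<subseteq> G\<^sup>+"
  proof
    fix e assume "e \<in> Sh"
    then obtain y w where e: "e = (Lay y (k-1), Lay w (Suc k))" "w \<in> coords m k" "y \<in> coords m k"
      "\<forall>t<k-2. y ! t = w ! t" unfolding Sh_def by blast
    have cond: "\<forall>t<k. (t < k - 1 - 1 \<or> k - 1 + 2 - 1 \<le> t) \<longrightarrow> y ! t = w ! t"
    proof (intro allI impI)
      fix t assume t: "t < k" "t < k - 1 - 1 \<or> k - 1 + 2 - 1 \<le> t"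
      then have "t < k - 2" using k2 by auto
      then show "y ! t = w ! t" using e(4) by blast
    qed
    have "(Lay y (k-1), Lay w (k - 1 + 2)) \<in> bf ^^ 2"
      by (rule bf_path[OF e(3) e(2) _ _ cond]) (use k2 in simp_all)
    moreover have "k - 1 + 2 = Suc k" using k2 by simp
    moreover have "bf ^^ 2 \<subseteq> G ^^ 2" by (rule relpow_mono_set) (simp add: G_eq)
    ultimately have "(Lay y (k-1), Lay w (Suc k)) \<in> G ^^ 2" by auto
    then show "e \<in> G\<^sup>+" unfolding e(1) trancl_power by (intro exI[of _ 2]) simp
  qed
  have HG: "H \<subseteq> G\<^sup>+" unfolding H_def using ShG by auto
  have reach: "\<exists>j\<le>k. (s,t) \<in> H ^^ j" if st: "(s,t) \<in> G\<^sup>*" for s t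
  proof -
    from st obtain n where n: "(s,t) \<in> G ^^ n" by (auto simp: rtrancl_power)
    show ?thesis
    proof (cases "n \<le> k")
      case True then show ?thesis using n relpow_mono_set[OF GH] by blast
    next
      case False
      then obtain n' where n': "n = Suc n'" by (cases n) auto
      from n n' obtain y where sy: "(s,y) \<in> G" by (meson relpow_Suc_D2)
      from n n' obtain r where rt: "(r,t) \<in> G" by (meson relpow_Suc_E)
      have lt: "lay t = lay s + n" by (rule relpow_lay[OF n])
      from G_cases[OF sy] obtain x where x: "s = Lay x 1" "x \<in> coords m k"
      proof
        assume "\<exists>u v i. s = Lay u i \<and> y = Lay v (Suc i) \<and> u \<in> coords m k \<and> v \<in> coords m k \<and> 1 \<le> i \<and> i \<le> k \<and>
            (\<forall>j<k. j \<noteq> i - 1 \<longrightarrow> u ! j = v ! j)"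
        then obtain u v i where uvi: "s = Lay u i" "y = Lay v (Suc i)" "u \<in> coords m k" "1 \<le> i" "i \<le> k" by blast
        have "lay t \<le> Suc (Suc k)" using G_cases[OF rt] by auto
        then have "i = 1" using lt uvi False by simp
        then show thesis using that uvi by simp
      next
        assume "\<exists>u b. s = Lay u (Suc k) \<and> y = BV b \<and> u \<in> coords m k \<and> b \<in> B \<and> (f u, b) \<in> E"
        then have "lay s = Suc k" by auto
        moreover have "lay t \<le> Suc (Suc k)" using G_cases[OF rt] by auto
        ultimately show thesis using lt False k2 by simp
      qed
      have "lay t = Suc (Suc k)"
      proof -
        have "lay t \<le> Suc (Suc k)" using G_cases[OF rt] by auto
        then show ?thesis using lt False x by simp
      qed
      then obtain b where b: "t = BV b" "b \<in> B" using G_cases[OF rt] by auto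
      from Ccov b obtain c where c: "c \<in> C" "(c,b) \<in> E" by blast
      then obtain w where w: "w \<in> coords m k" "f w = c" using CA fA by auto
      define yy where "yy = take (k-2) w @ drop (k-2) x"
      have lx: "length x = k" "length w = k" "set x \<subseteq> {..<m}" "set w \<subseteq> {..<m}" using x w coordsD by auto
      have ly: "length yy = k" unfolding yy_def using lx k2 by simp
      have yyc: "yy \<in> coords m k" unfolding coords_def using ly lx yy_def
        by (auto dest: in_set_takeD in_set_dropD)
      have yyx: "yy ! t = x ! t" if "k - 2 \<le> t" "t < k" for t
        unfolding yy_def using that lx by (simp add: nth_append)
      have yyw: "yy ! t = w ! t" if "t < k - 2" for t
        unfolding yy_def using that lx by (simp add: nth_append)
      have p1: "(Lay x 1, Lay yy (1 + (k-2))) \<in> bf ^^ (k-2)"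
        by (rule bf_path) (use x yyc k2 yyx in auto)
      have p1': "(s, Lay yy (k-1)) \<in> H ^^ (k-2)"
      proof -
        have "bf \<subseteq> H" using GH G_eq by auto
        then have "(Lay x 1, Lay yy (1 + (k-2))) \<in> H ^^ (k-2)" using p1 relpow_mono_set by blast
        moreover have "1 + (k-2) = k - 1" using k2 by simp
        ultimately show ?thesis using x by simp
      qed
      have e2: "(Lay yy (k-1), Lay w (Suc k)) \<in> H" unfolding H_def Sh_def using w c yyc yyw by blast
      have e3: "(Lay w (Suc k), BV b) \<in> H" using GH G_eq w c b unfolding ab_def by auto
      have "(s, t) \<in> H ^^ Suc (Suc (k-2))" using p1' e2 e3 b(1) by (meson relpow_Suc_I)
      moreover have "Suc (Suc (k-2)) = k" using k2 by simp
      ultimately show ?thesis by auto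
    qed
  qed
  have "is_tc_spanner G k H" unfolding is_tc_spanner_def using HG reach by blast
  then show ?thesis using finH cH by blast
qed

end


lemma main_inst:
  fixes k m n :: nat and A B :: "nat set" and E :: "(nat \<times> nat) set" and f :: "nat list \<Rightarrow> nat"
  assumes k2: "k \<ge> 2" and nk: "n = m ^ k" and n1: "n \<ge> 1"
  and nsc: "nice_set_cover A B E (real n) (real n powr (1 + 3 / (2 * real k))) (real n powr (1 / (5 * real k)))"
  and nb: "\<forall>b\<in>B. \<exists>a\<in>A. (a, b) \<in> E"
  and fb: "bij_betw f (coords m k) A"
  shows "1/2 * real (OPT_NSC A B E) * real n powr (2 / real k) \<le> real (S_k k (nsc_butterfly_graph m k f B E)) \<and>
         real (S_k k (nsc_butterfly_graph m k f B E)) \<le> (real k + 2) * real (OPT_NSC A B E) * real n powr (2 / real k)"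
proof -
  interpret BF m k f B E .
  have m1: "m \<ge> 1" using n1 nk k2 by (cases m) (auto simp: zero_power)
  define M where "M = real m"
  have M1: "M \<ge> 1" using m1 unfolding M_def by simp
  have Mpos: "M > 0" using M1 by simp
  have kpos: "real k > 0" using k2 by simp
  have pw: "real n powr r = M powr (real k * r)" for r
  proof -
    have "real n = M powr real k" unfolding nk M_def using Mpos M_def by (simp add: powr_realpow)
    then show ?thesis by (simp add: powr_powr)
  qed
  have n2: "real n powr (2 / real k) = M^2"
  proof -
    have "real k * (2 / real k) = 2" using kpos by simp
    then show ?thesis using pw Mpos by simp
  qed
  define q where "q = M powr (1/5)"
  have nq: "real n powr (1 / (5 * real k)) = q"
  proof -
    have e: "real k * (1 / (5 * real k)) = 1/5" using kpos by simp
    show ?thesis unfolding q_def by (simp only: pw e)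
  qed
  have nb': "real n powr (1 + 3 / (2 * real k)) / real n = M powr (3/2)"
  proof -
    have "real k * (1 + 3 / (2 * real k)) = real k + 3/2" using kpos by (simp add: field_simps)
    then have "real n powr (1 + 3 / (2 * real k)) = M powr (real k + 3/2)" using pw by simp
    also have "\<dots> = M powr real k * M powr (3/2)" by (simp add: powr_add)
    finally show ?thesis using Mpos unfolding nk M_def by (simp add: powr_realpow)
  qed
  from nsc[unfolded nice_set_cover_def nq nb'] obtain Bl where
    finA: "finite A" and finB: "finite B" and cA: "real (card A) = real n" and EAB: "E \<subseteq> A \<times> B"
    and blk0: "\<forall>i<card A. Bl i \<subseteq> B \<and> real (card (Bl i)) = M powr (3/2)"
    and disj0: "\<forall>i<card A. \<forall>j<card A. i \<noteq> j \<longrightarrow> Bl i \<inter> Bl j = {}"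
    and cov0: "(\<Union>i<card A. Bl i) = B"
    and aon0: "\<forall>v\<in>A. \<forall>i<card A. (\<exists>b\<in>Bl i. (v, b) \<in> E) \<longrightarrow> (\<forall>b\<in>Bl i. (v, b) \<in> E)"
    and deg0: "\<forall>v\<in>A. real (card {i. i < card A \<and> (\<exists>b\<in>Bl i. (v, b) \<in> E)}) \<le> q"
    by blast
  have cardA: "card A = m^k" using cA nk by (simp only: of_nat_eq_iff)
  define s where "s = card (Bl 0)"
  have s_real: "real s = M powr (3/2)" using blk0 cardA m1 unfolding s_def by simp
  have blk: "\<forall>i<m^k. Bl i \<subseteq> B \<and> card (Bl i) = s"
  proof (intro allI impI)
    fix i assume "i < m^k"
    then have "Bl i \<subseteq> B" "real (card (Bl i)) = real s" using blk0 cardA s_real by auto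
    then show "Bl i \<subseteq> B \<and> card (Bl i) = s" by (simp only: of_nat_eq_iff)
  qed
  have Ms: "M \<le> M powr (3/2)" using powr_mono[of 1 "3/2" M] M1 by simp
  have sm: "m \<le> s" using Ms s_real unfolding M_def by simp
  have s1: "s \<ge> 1" using sm m1 by simp
  have finE: "finite E" using EAB finA finB by (meson finite_SigmaI finite_subset)
  define P where "P t = (\<exists>C. C \<subseteq> A \<and> (\<forall>b\<in>B. \<exists>a\<in>C. (a, b) \<in> E) \<and> card C = t)" for t
  have OPT_eq: "OPT_NSC A B E = (LEAST t. P t)" unfolding OPT_NSC_def P_def by simp
  have "P (card A)" unfolding P_def using nb by blast
  then have "P (OPT_NSC A B E)" unfolding OPT_eq by (rule LeastI)
  then obtain C0 where C0: "C0 \<subseteq> A" "\<forall>b\<in>B. \<exists>a\<in>C0. (a, b) \<in> E" "card C0 = OPT_NSC A B E"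
    unfolding P_def by blast
  have opt: "\<forall>C. C \<subseteq> A \<and> (\<forall>b\<in>B. \<exists>a\<in>C. (a,b) \<in> E) \<longrightarrow> OPT_NSC A B E \<le> card C"
    unfolding OPT_eq P_def by (auto intro: Least_le)
  define OPT where "OPT = OPT_NSC A B E"
  define Q where "Q t = (\<exists>H. finite H \<and> is_tc_spanner G k H \<and> card H = t)" for t
  have S_eq: "S_k k G = (LEAST t. Q t)" unfolding S_k_def Q_def by simp
  obtain H where H: "finite H" "is_tc_spanner G k H" "card H \<le> m^k * k * m + card E + card C0 * m^2"
    using upper_bound[OF m1 k2 fb finB finE C0(1) C0(2)] by blast
  have QH: "Q (card H)" unfolding Q_def using H by blast
  have S_up: "S_k k G \<le> card H" unfolding S_eq using QH by (rule Least_le)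
  have "Q (S_k k G)" unfolding S_eq using QH by (rule LeastI)
  then obtain H0 where H0: "finite H0" "is_tc_spanner G k H0" "card H0 = S_k k G" unfolding Q_def by blast
  have low: "OPT * m^2 \<le> 2 * card H0"
    unfolding OPT_def
  proof (rule lower_bound[OF m1 k2 fb EAB nb blk _ _ _ sm opt finB])
    show "\<forall>i<m^k. \<forall>j<m^k. i \<noteq> j \<longrightarrow> Bl i \<inter> Bl j = {}" using disj0 cardA by simp
    show "(\<Union>i<m^k. Bl i) = B" using cov0 cardA by simp
    show "\<forall>v\<in>A. \<forall>i<m^k. (\<exists>b\<in>Bl i. (v, b) \<in> E) \<longrightarrow> (\<forall>b\<in>Bl i. (v, b) \<in> E)" using aon0 cardA by simp
    show "H0 \<subseteq> G\<^sup>+" using H0(2) unfolding is_tc_spanner_def by blast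
    show "finite H0" by (rule H0(1))
    show "\<forall>(u, v)\<in>G\<^sup>*. \<exists>j\<le>k. (u, v) \<in> H0 ^^ j" using H0(2) unfolding is_tc_spanner_def by blast
  qed
  define bl where "bl a = {i. i < m^k \<and> (\<exists>b\<in>Bl i. (a, b) \<in> E)}" for a
  have deg: "real (card (bl a)) \<le> q" if "a \<in> A" for a using deg0 that cardA unfolding bl_def by simp
  have finbl: "finite (bl a)" for a unfolding bl_def by simp
  have finBl: "i < m^k \<Longrightarrow> finite (Bl i)" for i using blk s1 by (metis card.infinite not_one_le_zero)
  have Mk_le: "M^k \<le> real OPT * q"
  proof -
    have sub: "{..<m^k} \<subseteq> (\<Union>a\<in>C0. bl a)"
    proof
      fix i assume i: "i \<in> {..<m^k}"
      then have "Bl i \<noteq> {}" using blk s1 by (metis card.empty lessThan_iff not_one_le_zero)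
      then obtain b where b: "b \<in> Bl i" by blast
      then have "b \<in> B" using blk i by blast
      then obtain a where "a \<in> C0" "(a,b) \<in> E" using C0(2) by blast
      then show "i \<in> (\<Union>a\<in>C0. bl a)" using b i unfolding bl_def by blast
    qed
    have finC0: "finite C0" using C0(1) finA finite_subset by blast
    have "m^k = card {..<m^k}" by simp
    also have "\<dots> \<le> card (\<Union>a\<in>C0. bl a)" by (rule card_mono[OF _ sub]) (use finC0 finbl in simp)
    also have "\<dots> \<le> (\<Sum>a\<in>C0. card (bl a))" by (rule card_UN_le[OF finC0])
    finally have "real (m^k) \<le> (\<Sum>a\<in>C0. real (card (bl a)))" by (metis of_nat_le_iff of_nat_sum)
    also have "\<dots> \<le> real (card C0) * q" by (rule sum_bounded_above) (use deg C0(1) in blast)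
    finally show ?thesis unfolding M_def OPT_def C0(3) by simp
  qed
  have E_le: "real (card E) \<le> M^k * q * real s"
  proof -
    have cEa: "card (E `` {a}) \<le> card (bl a) * s" if "a \<in> A" for a
    proof -
      have sub: "E `` {a} \<subseteq> (\<Union>i\<in>bl a. Bl i)"
      proof
        fix b assume "b \<in> E `` {a}"
        then have ab: "(a,b) \<in> E" by simp
        then have "b \<in> B" using EAB by blast
        then obtain i where "i < m^k" "b \<in> Bl i" using cov0 cardA by auto
        then show "b \<in> (\<Union>i\<in>bl a. Bl i)" using ab unfolding bl_def by blast
      qed
      have "card (E `` {a}) \<le> card (\<Union>i\<in>bl a. Bl i)"
        by (rule card_mono[OF _ sub]) (use finbl finBl in \<open>auto simp: bl_def\<close>)
      also have "\<dots> \<le> (\<Sum>i\<in>bl a. card (Bl i))" by (rule card_UN_le[OF finbl])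
      also have "\<dots> = card (bl a) * s" using blk unfolding bl_def by simp
      finally show ?thesis .
    qed
    have "E \<subseteq> Sigma A (\<lambda>a. E `` {a})" using EAB by auto
    then have "card E \<le> card (Sigma A (\<lambda>a. E `` {a}))"
      by (rule card_mono[rotated]) (use finA finE in auto)
    also have "\<dots> = (\<Sum>a\<in>A. card (E `` {a}))" by (rule card_SigmaI) (use finA finE in auto)
    finally have "real (card E) \<le> (\<Sum>a\<in>A. real (card (E `` {a})))" by (metis of_nat_le_iff of_nat_sum)
    also have "\<dots> \<le> real (card A) * (q * real s)"
    proof (rule sum_bounded_above)
      fix a assume a: "a \<in> A"
      have "real (card (E `` {a})) \<le> real (card (bl a)) * real s" using cEa[OF a] by (metis of_nat_le_iff of_nat_mult)
      also have "\<dots> \<le> q * real s" using deg[OF a] by (intro mult_right_mono) auto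
      finally show "real (card (E `` {a})) \<le> q * real s" .
    qed
    finally show ?thesis using cardA unfolding M_def by simp
  qed
  have q1: "q \<ge> 1" unfolding q_def using M1 by (simp add: ge_one_powr_ge_zero)
  have qM: "q \<le> M" unfolding q_def using powr_mono[of "1/5" 1 M] M1 by simp
  have qqs: "q * q * real s \<le> M^2"
  proof -
    have "q * q * real s = M powr (1/5 + 1/5 + 3/2)" unfolding q_def s_real by (simp only: powr_add)
    also have "\<dots> \<le> M powr 2" using M1 by (intro powr_mono) auto
    also have "\<dots> = M^2" using Mpos by simp
    finally show ?thesis .
  qed
  have O0: "real OPT \<ge> 0" by simp
  have t1: "M^k * real k * M \<le> real k * (real OPT * M^2)"
  proof -
    have "M^k * M \<le> real OPT * q * M" using Mk_le Mpos by (intro mult_right_mono) auto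
    also have "\<dots> \<le> real OPT * M * M" using qM O0 Mpos by (intro mult_right_mono mult_left_mono) auto
    finally have "M^k * M \<le> real OPT * M^2" by (simp add: power2_eq_square mult.assoc)
    then show ?thesis using kpos by (simp add: mult.commute mult.left_commute)
  qed
  have t2: "real (card E) \<le> real OPT * M^2"
  proof -
    have "M^k * q * real s \<le> real OPT * q * q * real s"
      using Mk_le q1 by (intro mult_right_mono) auto
    also have "\<dots> = real OPT * (q * q * real s)" by (simp add: mult.assoc)
    also have "\<dots> \<le> real OPT * M^2" using qqs O0 by (rule mult_left_mono)
    finally show ?thesis using E_le by linarith
  qed
  have "real (card H) \<le> M^k * real k * M + real (card E) + real OPT * M^2"
    using H(3) unfolding M_def OPT_def C0(3) by (metis of_nat_add of_nat_le_iff of_nat_mult of_nat_power)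
  also have "\<dots> \<le> (real k + 2) * (real OPT * M^2)" using t1 t2 by (simp add: algebra_simps)
  finally have up: "real (S_k k G) \<le> (real k + 2) * real OPT * M^2"
    using S_up by (simp add: mult.assoc)
  have lo: "1/2 * real OPT * M^2 \<le> real (S_k k G)"
  proof -
    have "real (OPT * m^2) \<le> real (2 * card H0)" using low by (simp only: of_nat_le_iff)
    then show ?thesis using H0(3) unfolding M_def by simp
  qed
  show ?thesis using up lo n2 unfolding OPT_def by simp
qed

theorem mainTheorem10:
  fixes k :: nat
  assumes "k \<ge> 2"
  shows "\<exists>c1 c2 :: real. \<exists>N :: nat. c1 > 0 \<and> c2 > 0 \<and>
    (\<forall>(m::nat) (n::nat) (A::nat set) (B::nat set) (E::(nat \<times> nat) set) (f::nat list \<Rightarrow> nat).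
       n = m ^ k \<and> n \<ge> N \<and>
       nice_set_cover A B E (real n) (real n powr (1 + 3 / (2 * real k)))
                                     (real n powr (1 / (5 * real k))) \<and>
       (\<forall>b\<in>B. \<exists>a\<in>A. (a, b) \<in> E) \<and>
       bij_betw f (coords m k) A
     \<longrightarrow>
       c1 * real (OPT_NSC A B E) * real n powr (2 / real k)
         \<le> real (S_k k (nsc_butterfly_graph m k f B E)) \<and>
       real (S_k k (nsc_butterfly_graph m k f B E))
         \<le> c2 * real (OPT_NSC A B E) * real n powr (2 / real k))"
proof -
  have main: "\<forall>(m::nat) (n::nat) (A::nat set) (B::nat set) (E::(nat \<times> nat) set) (f::nat list \<Rightarrow> nat).
       n = m ^ k \<and> n \<ge> 1 \<and>
       nice_set_cover A B E (real n) (real n powr (1 + 3 / (2 * real k)))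
                                     (real n powr (1 / (5 * real k))) \<and>
       (\<forall>b\<in>B. \<exists>a\<in>A. (a, b) \<in> E) \<and>
       bij_betw f (coords m k) A
     \<longrightarrow>
       1/2 * real (OPT_NSC A B E) * real n powr (2 / real k)
         \<le> real (S_k k (nsc_butterfly_graph m k f B E)) \<and>
       real (S_k k (nsc_butterfly_graph m k f B E))
         \<le> (real k + 2) * real (OPT_NSC A B E) * real n powr (2 / real k)"
  proof (intro allI impI)
    fix m n A B E f
    assume a: "n = m ^ k \<and> n \<ge> 1 \<and>
       nice_set_cover A B E (real n) (real n powr (1 + 3 / (2 * real k))) (real n powr (1 / (5 * real k))) \<and>
       (\<forall>b\<in>B. \<exists>a\<in>A. (a, b) \<in> E) \<and> bij_betw f (coords m k) A"
    then show "1/2 * real (OPT_NSC A B E) * real n powr (2 / real k)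
         \<le> real (S_k k (nsc_butterfly_graph m k f B E)) \<and>
       real (S_k k (nsc_butterfly_graph m k f B E))
         \<le> (real k + 2) * real (OPT_NSC A B E) * real n powr (2 / real k)"
      using main_inst[OF assms, of n m A B E f] by blast
  qed
  have pos: "(0::real) < 1/2" "0 < real k + 2" by simp_all
  show ?thesis
    apply (rule exI[of _ "1/2"])
    apply (rule exI[of _ "real k + 2"])
    apply (rule exI[of _ "1::nat"])
    using pos main by blast
qed


end
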